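(* Let $J$ be either a closed interval or a circle, let $n\geq 4$, let $\gamma:J\to\mathbb{R}^n$ be an injective continuous map of bounded variation, and let $\varepsilon>0$. Let $P:\mathbb{R}^n\to\mathbb{R}^{n-1}$ be the projection onto the last $n-1$ coordinates. Then there exists a linear operator $T:\mathbb{R}^n\to\mathbb{R}^{n-1}$ with $\|T-P\|<\varepsilon$ such that $T\circ\gamma$ is injective.
   Context: $\|\cdot\|$ denotes the operator norm with respect to the Euclidean norms. *)

theory Defs
  imports "HOL-Analysis.Analysis"
begin

definition bounded_variation_on :: "(real \<Rightarrow> 'a::real_normed_vector) \<Rightarrow> real \<Rightarrow> real \<Rightarrow> bool" where
  "bounded_variation_on f a b \<longleftrightarrow>
     (\<exists>M. \<forall>(n::nat) (t::nat \<Rightarrow> real).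
        (\<forall>i\<le>n. a \<le> t i \<and> t i \<le> b) \<and> (\<forall>i<n. t i \<le> t (Suc i)) \<longrightarrow>
        (\<Sum>i<n. norm (f (t (Suc i)) - f (t i))) \<le> M)"

definition circle_bounded_variation :: "(complex \<Rightarrow> 'a::real_normed_vector) \<Rightarrow> bool" where
  "circle_bounded_variation f \<longleftrightarrow> bounded_variation_on (\<lambda>t. f (cis (2 * pi * t))) 0 1"

end

theory Submission
  imports Defs
begin


definition varf :: "(real \<Rightarrow> 'a::real_normed_vector) \<Rightarrow> real \<Rightarrow> real \<Rightarrow> real" where
  "varf f a s = Sup {\<sigma>. \<exists>(n::nat) (p::nat \<Rightarrow> real). (\<forall>i\<le>n. a \<le> p i \<and> p i \<le> s) \<and> (\<forall>i<n. p i \<le> p (Suc i))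
      \<and> \<sigma> = (\<Sum>i<n. norm (f (p (Suc i)) - f (p i)))}"

lemma var_ineq:
  assumes bv: "bounded_variation_on f a b" and as: "a \<le> s" and st: "s \<le> t" and tb: "t \<le> b"
  shows "norm (f t - f s) \<le> varf f a t - varf f a s"
proof -
  define P where "P = (\<lambda>s. {\<sigma>. \<exists>(n::nat) (p::nat \<Rightarrow> real). (\<forall>i\<le>n. a \<le> p i \<and> p i \<le> s) \<and> (\<forall>i<n. p i \<le> p (Suc i))
      \<and> \<sigma> = (\<Sum>i<n. norm (f (p (Suc i)) - f (p i)))})"
  have vP: "varf f a s = Sup (P s)" "varf f a t = Sup (P t)" by (simp_all add: varf_def P_def)
  obtain M where M: "\<And>n p. (\<forall>i\<le>n. a \<le> p i \<and> p i \<le> b) \<and> (\<forall>i<n. p i \<le> p (Suc i)) \<Longrightarrow>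
        (\<Sum>i<n. norm (f (p (Suc i)) - f (p i))) \<le> M"
    using bv unfolding bounded_variation_on_def by blast
  have bdd: "bdd_above (P t)"
    unfolding bdd_above_def P_def using M tb by (smt (verit) mem_Collect_eq)
  have ne: "P s \<noteq> {}"
  proof -
    have "0 \<in> P s" unfolding P_def using as
      by (auto intro!: exI[of _ 0] exI[of _ "\<lambda>_. a"])
    then show ?thesis by blast
  qed
  have key: "\<sigma> \<le> Sup (P t) - norm (f t - f s)" if "\<sigma> \<in> P s" for \<sigma>
  proof -
    from that obtain n p where p: "\<forall>i\<le>n. a \<le> p i \<and> p i \<le> s" "\<forall>i<n. p i \<le> p (Suc i)"
      and \<sigma>: "\<sigma> = (\<Sum>i<n. norm (f (p (Suc i)) - f (p i)))" unfolding P_def by blast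
    define q where "q = p(Suc n := s, Suc (Suc n) := t)"
    have qp: "i \<le> n \<Longrightarrow> q i = p i" for i by (simp add: q_def)
    have "(\<Sum>i<n. norm (f (q (Suc i)) - f (q i))) = \<sigma>"
      unfolding \<sigma> by (rule sum.cong) (auto simp: qp)
    then have sq: "(\<Sum>i<Suc (Suc n). norm (f (q (Suc i)) - f (q i))) = \<sigma> + norm (f s - f (p n)) + norm (f t - f s)"
      by (simp add: q_def)
    have "(\<Sum>i<Suc (Suc n). norm (f (q (Suc i)) - f (q i))) \<in> P t"
      unfolding P_def
    proof (intro CollectI exI conjI)
      show "\<forall>i\<le>Suc (Suc n). a \<le> q i \<and> q i \<le> t"
        using p as st by (auto simp: q_def le_Suc_eq)
      show "\<forall>i<Suc (Suc n). q i \<le> q (Suc i)"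
        using p st by (auto simp: q_def less_Suc_eq)
    qed simp
    then have "\<sigma> + norm (f s - f (p n)) + norm (f t - f s) \<le> Sup (P t)"
      using sq bdd by (metis cSup_upper)
    then show ?thesis by (smt (verit) norm_ge_zero)
  qed
  have "Sup (P s) \<le> Sup (P t) - norm (f t - f s)"
    using ne key by (rule cSup_least)
  then show ?thesis using vP by simp
qed

lemma quot_lip:
  fixes N N0 :: "'a::real_normed_vector" and D D0 d r :: real
  assumes d: "d > 0" "\<bar>D0\<bar> = d" "\<bar>D\<bar> \<ge> d/2"
    and nN: "norm (N - N0) \<le> 2*r" and dD: "\<bar>D - D0\<bar> \<le> 2*r"
  shows "norm (N /\<^sub>R D - N0 /\<^sub>R D0) \<le> ((2*d + 2*norm N0) / (d*d/2)) * r"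
proof -
  have D: "D \<noteq> 0" "D0 \<noteq> 0" using d by auto
  have eq: "N /\<^sub>R D - N0 /\<^sub>R D0 = (1/(D*D0)) *\<^sub>R (D0 *\<^sub>R (N - N0) + (D0 - D) *\<^sub>R N0)"
  proof -
    define c where "c = 1/(D*D0)"
    have e1: "c * D0 = inverse D" and e2: "c * D = inverse D0" using D by (simp_all add: c_def field_simps)
    have "c *\<^sub>R (D0 *\<^sub>R (N - N0) + (D0 - D) *\<^sub>R N0) = (c*D0) *\<^sub>R N - (c*D) *\<^sub>R N0"
      by (simp add: algebra_simps)
    then show ?thesis unfolding c_def[symmetric] using e1 e2 by simp
  qed
  have r0: "r \<ge> 0" using dD by linarith
  have "norm (D0 *\<^sub>R (N - N0) + (D0 - D) *\<^sub>R N0) \<le> d * (2*r) + (2*r) * norm N0"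
  proof -
    have "norm (D0 *\<^sub>R (N - N0) + (D0 - D) *\<^sub>R N0) \<le> \<bar>D0\<bar> * norm (N - N0) + \<bar>D0 - D\<bar> * norm N0"
      by (metis norm_scaleR norm_triangle_ineq)
    also have "\<dots> \<le> d * (2*r) + (2*r) * norm N0"
      using d nN dD by (intro add_mono mult_mono) auto
    finally show ?thesis .
  qed
  moreover have "\<bar>D*D0\<bar> \<ge> d*d/2" using d by (simp add: abs_mult)
  ultimately have "norm (N /\<^sub>R D - N0 /\<^sub>R D0) \<le> (d * (2*r) + (2*r) * norm N0) / (d*d/2)"
  proof -
    assume h1: "norm (D0 *\<^sub>R (N - N0) + (D0 - D) *\<^sub>R N0) \<le> d * (2*r) + (2*r) * norm N0"
      and h2: "\<bar>D*D0\<bar> \<ge> d*d/2"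
    have "norm (N /\<^sub>R D - N0 /\<^sub>R D0) = norm (D0 *\<^sub>R (N - N0) + (D0 - D) *\<^sub>R N0) / \<bar>D*D0\<bar>"
      unfolding eq by (simp add: divide_inverse abs_mult)
    also have "\<dots> \<le> (d * (2*r) + (2*r) * norm N0) / (d*d/2)"
      by (rule frac_le) (use h1 h2 d r0 in auto)
    finally show ?thesis .
  qed
  also have "\<dots> = ((2*d + 2*norm N0) / (d*d/2)) * r" by (simp add: field_simps)
  finally show ?thesis .
qed


lemma nfst: "norm (fst z) \<le> norm z" using norm_fst_le[of "fst z" "snd z"] by (simp only: prod.collapse)
lemma nsnd: "norm (snd z) \<le> norm z" using norm_snd_le[of "snd z" "fst z"] by (simp only: prod.collapse)

lemma secants_negligible:
  fixes \<delta> :: "real \<Rightarrow> real \<times> (real^'m::finite)"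
  assumes m3: "CARD('m) \<ge> 3" and bv: "bounded_variation_on \<delta> a b"
  shows "negligible {(snd (\<delta> s) - snd (\<delta> t)) /\<^sub>R (fst (\<delta> s) - fst (\<delta> t)) | s t.
            s \<in> {a..b} \<and> t \<in> {a..b} \<and> fst (\<delta> s) \<noteq> fst (\<delta> t)}" (is "negligible ?S")
proof -
  obtain i j k :: 'm where ijk: "i \<noteq> j" "j \<noteq> k" "i \<noteq> k"
  proof -
    obtain U :: "'m set" where "card U = 3" using obtain_subset_with_card_n[OF m3] by metis
    then obtain x y z :: 'm where "x \<noteq> y" "y \<noteq> z" "x \<noteq> z" unfolding card_3_iff by blast
    then show ?thesis using that by blast
  qed
  define L where "L = varf \<delta> a"
  define A where "A = L ` {a..b}"
  define pick where "pick u = (SOME t. t \<in> {a..b} \<and> L t = u)" for u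
  define g where "g u = \<delta> (pick u)" for u
  have pick: "pick u \<in> {a..b} \<and> L (pick u) = u" if "u \<in> A" for u
    using that unfolding A_def pick_def by (metis (mono_tags, lifting) imageE someI)
  have vi: "norm (\<delta> t - \<delta> s) \<le> \<bar>L t - L s\<bar>" if "s \<in> {a..b}" "t \<in> {a..b}" for s t
  proof (cases "s \<le> t")
    case True then show ?thesis using var_ineq[OF bv, of s t] that unfolding L_def by auto
  next
    case False then show ?thesis using var_ineq[OF bv, of t s] that unfolding L_def
      by (auto simp: norm_minus_commute)
  qed
  have g2: "g (L s) = \<delta> s" if "s \<in> {a..b}" for s
  proof -
    have "L s \<in> A" using that by (simp add: A_def)
    from pick[OF this] have "norm (\<delta> (pick (L s)) - \<delta> s) \<le> 0" using vi[OF that, of "pick (L s)"] by simp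
    then show ?thesis by (simp add: g_def)
  qed
  have lip: "norm (g u - g v) \<le> \<bar>u - v\<bar>" if "u \<in> A" "v \<in> A" for u v
    using vi[of "pick v" "pick u"] pick[OF that(1)] pick[OF that(2)] by (simp add: g_def)
  define X where "X u = fst (g u)" for u
  define Y where "Y u = snd (g u)" for u
  have lipX: "\<bar>X u - X v\<bar> \<le> \<bar>u - v\<bar>" if "u \<in> A" "v \<in> A" for u v
  proof -
    have "\<bar>X u - X v\<bar> \<le> norm (g u - g v)"
      using nfst[of "g u - g v"] by (simp add: X_def)
    then show ?thesis using lip[OF that] by linarith
  qed
  have lipY: "norm (Y u - Y v) \<le> \<bar>u - v\<bar>" if "u \<in> A" "v \<in> A" for u v
  proof -
    have "norm (Y u - Y v) \<le> norm (g u - g v)"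
      using nsnd[of "g u - g v"] by (simp add: Y_def)
    then show ?thesis using lip[OF that] by linarith
  qed
  define E where "E = {x::real^'m. x$k = 0 \<and> x$i \<in> A \<and> x$j \<in> A \<and> X (x$i) \<noteq> X (x$j)}"
  define h where "h x = (Y (x$i) - Y (x$j)) /\<^sub>R (X (x$i) - X (x$j))" for x :: "real^'m"
  have negE: "negligible E"
    by (rule negligible_subset[OF negligible_standard_hyperplane_cart[of k]]) (auto simp: E_def)
  have "negligible (h ` E)"
  proof (rule negligible_locally_Lipschitz_image)
    show "DIM(real^'m) \<le> DIM(real^'m)" by simp
    show "negligible E" by (rule negE)
    fix x assume x: "x \<in> E"
    define u0 where "u0 = x$i"
    define v0 where "v0 = x$j"
    define d where "d = \<bar>X u0 - X v0\<bar>"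
    have A0: "u0 \<in> A" "v0 \<in> A" using x by (auto simp: E_def u0_def v0_def)
    have d0: "d > 0" using x by (auto simp: E_def u0_def v0_def d_def)
    show "\<exists>T B. open T \<and> x \<in> T \<and> (\<forall>y \<in> E \<inter> T. norm(h y - h x) \<le> B * norm(y - x))"
    proof (intro exI conjI ballI)
      show "open (ball x (d/4))" by simp
      show "x \<in> ball x (d/4)" using d0 by simp
      fix y assume y: "y \<in> E \<inter> ball x (d/4)"
      define r where "r = norm (y - x)"
      have r: "r < d/4" using y by (simp add: r_def dist_norm norm_minus_commute)
      have du: "\<bar>y$i - u0\<bar> \<le> r" "\<bar>y$j - v0\<bar> \<le> r"
        using component_le_norm_cart[of "y - x" i] component_le_norm_cart[of "y - x" j]
        by (simp_all add: r_def u0_def v0_def)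
      have Ay: "y$i \<in> A" "y$j \<in> A" using y by (auto simp: E_def)
      have Xd: "\<bar>X (y$i) - X u0\<bar> \<le> r" "\<bar>X (y$j) - X v0\<bar> \<le> r"
        using lipX[OF Ay(1) A0(1)] lipX[OF Ay(2) A0(2)] du by linarith+
      have Yd: "norm (Y (y$i) - Y u0) \<le> r" "norm (Y (y$j) - Y v0) \<le> r"
        using lipY[OF Ay(1) A0(1)] lipY[OF Ay(2) A0(2)] du by linarith+
      have "norm (h y - h x) \<le> ((2*d + 2*norm (Y u0 - Y v0)) / (d*d/2)) * r"
        unfolding h_def u0_def[symmetric] v0_def[symmetric]
      proof (rule quot_lip[OF d0])
        show "\<bar>X u0 - X v0\<bar> = d" by (simp add: d_def)
        show "d/2 \<le> \<bar>X (y$i) - X (y$j)\<bar>" using Xd r d_def by linarith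
        show "\<bar>X (y$i) - X (y$j) - (X u0 - X v0)\<bar> \<le> 2*r" using Xd by linarith
        have "Y (y$i) - Y (y$j) - (Y u0 - Y v0) = (Y (y$i) - Y u0) - (Y (y$j) - Y v0)" by simp
        then have "norm (Y (y$i) - Y (y$j) - (Y u0 - Y v0)) \<le> norm (Y (y$i) - Y u0) + norm (Y (y$j) - Y v0)"
          by (metis norm_triangle_ineq4)
        then show "norm (Y (y$i) - Y (y$j) - (Y u0 - Y v0)) \<le> 2*r" using Yd by linarith
      qed
      then show "norm (h y - h x) \<le> ((2*d + 2*norm (Y u0 - Y v0)) / (d*d/2)) * norm (y - x)"
        by (simp add: r_def)
    qed
  qed
  moreover have "?S \<subseteq> h ` E"
  proof
    fix w assume "w \<in> ?S"
    then obtain s t where st: "s \<in> {a..b}" "t \<in> {a..b}" "fst (\<delta> s) \<noteq> fst (\<delta> t)"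
      and w: "w = (snd (\<delta> s) - snd (\<delta> t)) /\<^sub>R (fst (\<delta> s) - fst (\<delta> t))" by blast
    define x :: "real^'m" where "x = (\<chi> l. if l = i then L s else if l = j then L t else 0)"
    have xc: "x$i = L s" "x$j = L t" "x$k = 0" using ijk by (simp_all add: x_def)
    have XY: "X (L s) = fst (\<delta> s)" "X (L t) = fst (\<delta> t)" "Y (L s) = snd (\<delta> s)" "Y (L t) = snd (\<delta> t)"
      using g2 st by (simp_all add: X_def Y_def)
    have "x \<in> E" using xc XY st by (auto simp: E_def A_def)
    moreover have "h x = w" using xc XY w by (simp add: h_def)
    ultimately show "w \<in> h ` E" by blast
  qed
  ultimately show ?thesis by (rule negligible_subset)
qed


lemma inj_from:
  fixes \<delta> :: "real \<Rightarrow> real \<times> (real^'m::finite)" and \<gamma> :: "'z \<Rightarrow> real \<times> (real^'m)"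
  assumes w: "w \<notin> {(snd (\<delta> s) - snd (\<delta> t)) /\<^sub>R (fst (\<delta> s) - fst (\<delta> t)) | s t.
            s \<in> I \<and> t \<in> I \<and> fst (\<delta> s) \<noteq> fst (\<delta> t)}"
    and inj: "inj_on \<gamma> Z" and Z: "\<And>z. z \<in> Z \<Longrightarrow> \<exists>t\<in>I. \<gamma> z = \<delta> t"
  shows "inj_on ((\<lambda>x. snd x - fst x *\<^sub>R w) \<circ> \<gamma>) Z"
proof (rule inj_onI)
  fix z1 z2 assume z: "z1 \<in> Z" "z2 \<in> Z" and eq: "((\<lambda>x. snd x - fst x *\<^sub>R w) \<circ> \<gamma>) z1 = ((\<lambda>x. snd x - fst x *\<^sub>R w) \<circ> \<gamma>) z2"
  obtain t1 t2 where t: "t1 \<in> I" "\<gamma> z1 = \<delta> t1" "t2 \<in> I" "\<gamma> z2 = \<delta> t2" using Z z by metis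
  have e: "snd (\<delta> t1) - snd (\<delta> t2) = (fst (\<delta> t1) - fst (\<delta> t2)) *\<^sub>R w"
    using eq t by (simp add: algebra_simps)
  show "z1 = z2"
  proof (cases "fst (\<delta> t1) = fst (\<delta> t2)")
    case True
    then have "\<delta> t1 = \<delta> t2" using e by (simp add: prod_eq_iff)
    then show ?thesis using inj z t by (metis inj_on_def)
  next
    case False
    then have "w = (snd (\<delta> t1) - snd (\<delta> t2)) /\<^sub>R (fst (\<delta> t1) - fst (\<delta> t2))" using e by simp
    then have "w \<in> {(snd (\<delta> s) - snd (\<delta> t)) /\<^sub>R (fst (\<delta> s) - fst (\<delta> t)) | s t.
            s \<in> I \<and> t \<in> I \<and> fst (\<delta> s) \<noteq> fst (\<delta> t)}" using t False by blast
    with w show ?thesis by blast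
  qed
qed

lemma good_w:
  fixes S :: "(real^'m::finite) set"
  assumes "negligible S" "\<epsilon> > 0"
  shows "\<exists>w. norm w < \<epsilon> \<and> w \<notin> S"
proof (rule ccontr)
  assume "\<not> ?thesis"
  then have "ball 0 \<epsilon> \<subseteq> S" by auto
  then have "negligible (ball (0::real^'m) \<epsilon>)" using assms(1) negligible_subset by blast
  moreover have "\<not> negligible (ball (0::real^'m) \<epsilon>)" using assms(2) by (intro open_not_negligible) auto
  ultimately show False by blast
qed

lemma T_props:
  fixes w :: "real^'m::finite"
  assumes "norm w < \<epsilon>"
  shows "linear (\<lambda>x::real \<times> (real^'m). snd x - fst x *\<^sub>R w) \<and> onorm (\<lambda>x::real \<times> (real^'m). (snd x - fst x *\<^sub>R w) - snd x) < \<epsilon>"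
proof
  show "linear (\<lambda>x::real \<times> (real^'m). snd x - fst x *\<^sub>R w)"
    by (auto intro!: linearI simp: algebra_simps)
  have "onorm (\<lambda>x::real \<times> (real^'m). (snd x - fst x *\<^sub>R w) - snd x) \<le> norm w"
  proof (rule onorm_le)
    fix x :: "real \<times> (real^'m)"
    have "norm ((snd x - fst x *\<^sub>R w) - snd x) = \<bar>fst x\<bar> * norm w" by simp
    also have "\<dots> \<le> norm x * norm w"
      using norm_fst_le[of "fst x" "snd x"] by (intro mult_right_mono) auto
    finally show "norm ((snd x - fst x *\<^sub>R w) - snd x) \<le> norm w * norm x" by (simp add: mult.commute)
  qed
  then show "onorm (\<lambda>x::real \<times> (real^'m). (snd x - fst x *\<^sub>R w) - snd x) < \<epsilon>" using assms by linarith
qed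

lemma sphere_cis:
  assumes "z \<in> sphere (0::complex) 1"
  shows "\<exists>t\<in>{0..1}. z = cis (2 * pi * t)"
proof
  define t where "t = Arg2pi z / (2*pi)"
  show "t \<in> {0..1}" using Arg2pi[of z] by (auto simp: t_def)
  have "z = of_real (norm z) * exp (\<i> * of_real (Arg2pi z))"
    using Arg2pi[of z] by (simp add: is_Arg_def)
  then show "z = cis (2 * pi * t)" using assms by (simp add: t_def cis_conv_exp)
qed

theorem lemma5p2:
  fixes \<epsilon> :: real
  assumes m3: "CARD('m::finite) \<ge> 3" and eps: "\<epsilon> > 0"
  shows
    "(\<forall>(a::real) b (\<gamma>::real \<Rightarrow> real \<times> (real^'m)).
        a \<le> b \<and> continuous_on {a..b} \<gamma> \<and> inj_on \<gamma> {a..b} \<and> bounded_variation_on \<gamma> a b \<longrightarrow>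
        (\<exists>T::real \<times> (real^'m) \<Rightarrow> real^'m. linear T \<and> onorm (\<lambda>x. T x - snd x) < \<epsilon> \<and>
            inj_on (T \<circ> \<gamma>) {a..b}))
   \<and> (\<forall>\<gamma>::complex \<Rightarrow> real \<times> (real^'m).
        continuous_on (sphere 0 1) \<gamma> \<and> inj_on \<gamma> (sphere 0 1) \<and> circle_bounded_variation \<gamma> \<longrightarrow>
        (\<exists>T::real \<times> (real^'m) \<Rightarrow> real^'m. linear T \<and> onorm (\<lambda>x. T x - snd x) < \<epsilon> \<and>
            inj_on (T \<circ> \<gamma>) (sphere 0 1)))"
proof (intro conjI allI impI)
  fix a b :: real and \<gamma> :: "real \<Rightarrow> real \<times> (real^'m)"
  assume h: "a \<le> b \<and> continuous_on {a..b} \<gamma> \<and> inj_on \<gamma> {a..b} \<and> bounded_variation_on \<gamma> a b"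
  obtain w where w: "norm w < \<epsilon>" "w \<notin> {(snd (\<gamma> s) - snd (\<gamma> t)) /\<^sub>R (fst (\<gamma> s) - fst (\<gamma> t)) | s t.
            s \<in> {a..b} \<and> t \<in> {a..b} \<and> fst (\<gamma> s) \<noteq> fst (\<gamma> t)}"
    using good_w[OF secants_negligible[OF m3] eps] h by blast
  show "\<exists>T::real \<times> (real^'m) \<Rightarrow> real^'m. linear T \<and> onorm (\<lambda>x. T x - snd x) < \<epsilon> \<and>
            inj_on (T \<circ> \<gamma>) {a..b}"
  proof -
    have "inj_on ((\<lambda>x. snd x - fst x *\<^sub>R w) \<circ> \<gamma>) {a..b}"
      by (rule inj_from[OF w(2)]) (use h in auto)
    then show ?thesis using T_props[OF w(1)] by (intro exI[of _ "\<lambda>x. snd x - fst x *\<^sub>R w"]) auto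
  qed
next
  fix \<gamma> :: "complex \<Rightarrow> real \<times> (real^'m)"
  assume h: "continuous_on (sphere 0 1) \<gamma> \<and> inj_on \<gamma> (sphere 0 1) \<and> circle_bounded_variation \<gamma>"
  define \<delta> where "\<delta> = (\<lambda>t. \<gamma> (cis (2 * pi * t)))"
  have bv: "bounded_variation_on \<delta> 0 1" using h by (simp add: circle_bounded_variation_def \<delta>_def)
  obtain w where w: "norm w < \<epsilon>" "w \<notin> {(snd (\<delta> s) - snd (\<delta> t)) /\<^sub>R (fst (\<delta> s) - fst (\<delta> t)) | s t.
            s \<in> {0..1} \<and> t \<in> {0..1} \<and> fst (\<delta> s) \<noteq> fst (\<delta> t)}"
    using good_w[OF secants_negligible[OF m3 bv] eps] by blast
  have Z: "\<exists>t\<in>{0..1}. \<gamma> z = \<delta> t" if "z \<in> sphere 0 1" for z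
    using sphere_cis[OF that] by (auto simp: \<delta>_def)
  show "\<exists>T::real \<times> (real^'m) \<Rightarrow> real^'m. linear T \<and> onorm (\<lambda>x. T x - snd x) < \<epsilon> \<and>
            inj_on (T \<circ> \<gamma>) (sphere 0 1)"
  proof -
    have "inj_on ((\<lambda>x. snd x - fst x *\<^sub>R w) \<circ> \<gamma>) (sphere 0 1)"
      by (rule inj_from[OF w(2)]) (use h Z in auto)
    then show ?thesis using T_props[OF w(1)] by (intro exI[of _ "\<lambda>x. snd x - fst x *\<^sub>R w"]) auto
  qed
qed
end
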